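(* Assume $\mathbb{E}\min(Z,W)<\infty$ and $q_1>0$. Then there exists a positive integer-valued random variable $N$ with $\mathbb{P}(N<\infty)=1$ such that, with probability one, $N\in S_n$ for all $n\ge N$.
   Context: Let $Z,W,(Z_n)_{n\ge1},(W_n)_{n\ge1}$ be independent, identically distributed random variables taking values in $\mathbb{N}=\{1,2,3,\dots\}$, with $q_1=\mathbb{P}(Z=1)$. Define the shortest-edge chain $S_n=\{n\}$ for $n\le 0$ and $S_n=\{n\}\cup S_{n-\min(Z_n,W_n)}$ for $n\ge1$. *)

theory Defs
  imports "HOL-Probability.Probability"
begin

text \<open>Given the step sizes d k = min(Z_k, W_k) (k \<ge> 1),
  in_chain d n m means m \<in> S_n, where S_n = {n} for n \<le> 0 and
  S_n = {n} \<union> S_(n - d n) for n \<ge> 1 (least solution of these equations).\<close>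
inductive in_chain :: "(nat \<Rightarrow> nat) \<Rightarrow> int \<Rightarrow> int \<Rightarrow> bool" for d :: "nat \<Rightarrow> nat" where
  self: "in_chain d n n"
| step: "n \<ge> 1 \<Longrightarrow> in_chain d (n - int (d (nat n))) m \<Longrightarrow> in_chain d n m"

definition chain_set :: "(nat \<Rightarrow> nat) \<Rightarrow> int \<Rightarrow> int set" where
  "chain_set d n = {m. in_chain d n m}"

end

theory Submission
  imports Defs
begin

lemma chain_from_cut:
  fixes d :: "nat \<Rightarrow> nat"
  assumes pos: "\<And>k. d k \<ge> 1"
    and cut: "\<And>j. j \<ge> 1 \<Longrightarrow> d (m + j) \<le> j"
  shows "n \<ge> m \<Longrightarrow> in_chain d (int n) (int m)"
proof (induction n rule: less_induct)
  case (less n)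
  show ?case
  proof (cases "n = m")
    case True then show ?thesis by (simp add: in_chain.self)
  next
    case False
    with less.prems have nm: "n > m" by simp
    have dn: "d n \<le> n - m" using cut[of "n - m"] nm by simp
    have d1: "d n \<ge> 1" by (rule pos)
    have IH: "in_chain d (int (n - d n)) (int m)"
      using less.IH[of "n - d n"] dn d1 nm by simp
    have eq: "int n - int (d (nat (int n))) = int (n - d n)" using dn nm by simp
    have h: "in_chain d (int n - int (d (nat (int n)))) (int m)"
      unfolding eq by (rule IH)
    show ?thesis
      by (rule in_chain.step[OF _ h]) (use nm in simp)
  qed
qed

lemma sum_ind_le: "(\<Sum>j<L. (if j < n then 1 else 0 :: ennreal)) = of_nat (min L n)"
  by (induction L) (auto simp: min_def)

lemma exp_bound:
  fixes x r :: real
  assumes "0 \<le> x" "x \<le> r" "r < 1"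
  shows "exp (- (x / (1 - r))) \<le> 1 - x"
proof -
  have "x / (1 - x) \<le> x / (1 - r)"
    using assms by (intro divide_left_mono) auto
  hence "1 + x / (1 - x) \<le> exp (x / (1 - r))"
    using exp_ge_add_one_self[of "x / (1 - r)"] by linarith
  moreover have "1 + x / (1 - x) = 1 / (1 - x)" using assms by (simp add: field_simps)
  ultimately have "1 / (1 - x) \<le> exp (x / (1 - r))" by simp
  hence "1 / exp (x / (1 - r)) \<le> 1 - x"
    using assms by (simp add: field_simps)
  thus ?thesis by (simp add: exp_minus field_simps)
qed

theorem mainTheorem7:
  fixes M :: "'a measure" and Zs Ws :: "nat \<Rightarrow> 'a \<Rightarrow> nat"
  assumes "prob_space M"
    and indep: "prob_space.indep_vars M (\<lambda>_. count_space UNIV)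
                  (\<lambda>i. case i of Inl k \<Rightarrow> Zs k | Inr k \<Rightarrow> Ws k) (UNIV :: (nat + nat) set)"
    and distZ: "\<And>k. distr M (count_space UNIV) (Zs k) = distr M (count_space UNIV) (Zs 0)"
    and distW: "\<And>k. distr M (count_space UNIV) (Ws k) = distr M (count_space UNIV) (Zs 0)"
    and posZ: "\<And>k \<omega>. \<omega> \<in> space M \<Longrightarrow> Zs k \<omega> \<ge> 1"
    and posW: "\<And>k \<omega>. \<omega> \<in> space M \<Longrightarrow> Ws k \<omega> \<ge> 1"
    and finmean: "(\<integral>\<^sup>+ \<omega>. ennreal (real (min (Zs 0 \<omega>) (Ws 0 \<omega>))) \<partial>M) < \<infinity>"
    and q1: "measure M {\<omega> \<in> space M. Zs 0 \<omega> = 1} > 0"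
  shows "\<exists>N :: 'a \<Rightarrow> enat.
           N \<in> measurable M (count_space UNIV)
         \<and> (\<forall>\<omega>\<in>space M. N \<omega> \<ge> 1)
         \<and> measure M {\<omega> \<in> space M. N \<omega> < \<infinity>} = 1
         \<and> (AE \<omega> in M. \<forall>n::nat. enat n \<ge> N \<omega> \<longrightarrow>
               int (the_enat (N \<omega>)) \<in> chain_set (\<lambda>k. min (Zs k \<omega>) (Ws k \<omega>)) (int n))"
proof -
  interpret P: prob_space M by (rule assms(1))
  define X where "X = (\<lambda>i. case i of Inl k \<Rightarrow> Zs k | Inr k \<Rightarrow> Ws k)"
  define E where "E i = {X i -` B \<inter> space M | B. B \<in> sets (count_space (UNIV::nat set))}" for i
  have indE: "P.indep_sets E UNIV" using indep unfolding P.indep_vars_def2 E_def X_def by auto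
  have rvX: "X i \<in> measurable M (count_space UNIV)" for i
    using indep unfolding P.indep_vars_def2 X_def by auto
  have mZ[measurable]: "Zs k \<in> measurable M (count_space UNIV)" for k
    using rvX[of "Inl k"] by (simp add: X_def)
  have mW[measurable]: "Ws k \<in> measurable M (count_space UNIV)" for k
    using rvX[of "Inr k"] by (simp add: X_def)
  define D where "D k \<omega> = min (Zs k \<omega>) (Ws k \<omega>)" for k \<omega>
  have mD[measurable]: "D k \<in> measurable M (count_space UNIV)" for k
    unfolding D_def by measurable
  define ZG where "ZG k j = {\<omega>\<in>space M. j < Zs k \<omega>}" for k j
  define WG where "WG k j = {\<omega>\<in>space M. j < Ws k \<omega>}" for k j
  define Ev where "Ev k j = {\<omega>\<in>space M. D k \<omega> \<le> j}" for k j
  have ZG_E: "ZG k j \<in> E (Inl k)" for k j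
    unfolding E_def X_def ZG_def by (auto intro!: exI[of _ "{j<..}"])
  have WG_E: "WG k j \<in> E (Inr k)" for k j
    unfolding E_def X_def WG_def by (auto intro!: exI[of _ "{j<..}"])
  have ZG_sets[measurable]: "ZG k j \<in> sets M" for k j unfolding ZG_def by measurable
  have WG_sets[measurable]: "WG k j \<in> sets M" for k j unfolding WG_def by measurable
  have Ev_sets[measurable]: "Ev k j \<in> sets M" for k j unfolding Ev_def by measurable
  have Ev_eq: "Ev k j = space M - (ZG k j \<inter> WG k j)" for k j
    unfolding Ev_def ZG_def WG_def D_def by auto
  define pz where "pz j = P.prob (ZG 0 j)" for j
  have pZ: "P.prob (ZG k j) = pz j" for k j
  proof -
    have "P.prob (ZG k j) = measure (distr M (count_space UNIV) (Zs k)) {j<..}"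
      by (subst measure_distr) (auto simp: ZG_def intro!: arg_cong[where f="P.prob"])
    also have "\<dots> = measure (distr M (count_space UNIV) (Zs 0)) {j<..}" by (simp only: distZ[of k])
    also have "\<dots> = pz j"
      by (subst measure_distr) (auto simp: ZG_def pz_def intro!: arg_cong[where f="P.prob"])
    finally show ?thesis .
  qed
  have pW: "P.prob (WG k j) = pz j" for k j
  proof -
    have "P.prob (WG k j) = measure (distr M (count_space UNIV) (Ws k)) {j<..}"
      by (subst measure_distr) (auto simp: WG_def intro!: arg_cong[where f="P.prob"])
    also have "\<dots> = measure (distr M (count_space UNIV) (Zs 0)) {j<..}" by (simp only: distW)
    also have "\<dots> = pz j"
      by (subst measure_distr) (auto simp: ZG_def pz_def intro!: arg_cong[where f="P.prob"])
    finally show ?thesis .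
  qed
  define a where "a j = (pz j)\<^sup>2" for j
  have pZW: "P.prob (ZG k j \<inter> WG k j) = a j" for k j
  proof -
    define F where "F i = (case i of Inl k \<Rightarrow> ZG k j | Inr k \<Rightarrow> WG k j)" for i
    have "P.prob (\<Inter>i\<in>{Inl k, Inr k}. F i) = (\<Prod>i\<in>{Inl k, Inr k}. P.prob (F i))"
      by (rule P.indep_setsD[OF indE]) (auto simp: F_def ZG_E WG_E)
    thus ?thesis by (simp add: F_def pZ pW a_def power2_eq_square)
  qed
  have pEv: "P.prob (Ev k j) = 1 - a j" for k j
    unfolding Ev_eq by (subst P.prob_compl) (auto simp: pZW)
  have a_nonneg: "0 \<le> a j" for j by (simp add: a_def)
  define q where "q = P.prob {\<omega> \<in> space M. Zs 0 \<omega> = 1}"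
  have q_pos: "0 < q" using q1 by (simp add: q_def)
  define r where "r = (1 - q)\<^sup>2"
  have q_le1: "q \<le> 1" unfolding q_def by (rule P.prob_le_1)
  have r_lt1: "r < 1" unfolding r_def using q_pos q_le1
    using mult_left_le_one_le[of "1-q" "1-q"] by (simp add: power2_eq_square)
  have a_le: "a j \<le> r" if "j \<ge> 1" for j
  proof -
    have sub: "ZG 0 j \<subseteq> space M - {\<omega> \<in> space M. Zs 0 \<omega> = 1}"
      using that by (auto simp: ZG_def)
    have "pz j \<le> P.prob (space M - {\<omega> \<in> space M. Zs 0 \<omega> = 1})"
      unfolding pz_def by (rule P.finite_measure_mono[OF sub]) measurable
    also have "\<dots> = 1 - q" unfolding q_def by (subst P.prob_compl) (auto, measurable)
    finally have "pz j \<le> 1 - q" .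
    moreover have "0 \<le> pz j" by (simp add: pz_def)
    ultimately show ?thesis unfolding a_def r_def by (intro power_mono) auto
  qed
  define I where "I = (\<integral>\<^sup>+ \<omega>. ennreal (real (min (Zs 0 \<omega>) (Ws 0 \<omega>))) \<partial>M)"
  have a_eq: "a j = P.prob {\<omega>\<in>space M. j < D 0 \<omega>}" for j
  proof -
    have "{\<omega>\<in>space M. j < D 0 \<omega>} = ZG 0 j \<inter> WG 0 j" by (auto simp: ZG_def WG_def D_def)
    thus ?thesis using pZW[of 0 j] by simp
  qed
  have sumI: "ennreal (\<Sum>j<L. a j) \<le> I" for L
  proof -
    have "ennreal (\<Sum>j<L. a j) = (\<Sum>j<L. ennreal (a j))" using a_nonneg by simp
    also have "\<dots> = (\<Sum>j<L. \<integral>\<^sup>+ \<omega>. indicator {\<omega>\<in>space M. j < D 0 \<omega>} \<omega> \<partial>M)"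
      by (intro sum.cong refl) (simp add: a_eq P.emeasure_eq_measure[symmetric])
    also have "\<dots> = (\<integral>\<^sup>+ \<omega>. (\<Sum>j<L. indicator {\<omega>\<in>space M. j < D 0 \<omega>} \<omega>) \<partial>M)"
      by (rule nn_integral_sum[symmetric]) measurable
    also have "\<dots> \<le> I" unfolding I_def
    proof (rule nn_integral_mono)
      fix \<omega> assume \<omega>: "\<omega> \<in> space M"
      have "(\<Sum>j<L. indicator {\<omega>\<in>space M. j < D 0 \<omega>} \<omega> :: ennreal)
            = (\<Sum>j<L. (if j < D 0 \<omega> then 1 else 0 :: ennreal))"
        using \<omega> by (intro sum.cong refl) (simp add: indicator_def)
      also have "\<dots> = of_nat (min L (D 0 \<omega>))" by (rule sum_ind_le)
      also have "\<dots> \<le> of_nat (D 0 \<omega>)" by simp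
      also have "\<dots> = ennreal (real (min (Zs 0 \<omega>) (Ws 0 \<omega>)))"
        by (simp add: D_def ennreal_of_nat_eq_real_of_nat)
      finally show "(\<Sum>j<L. indicator {\<omega>\<in>space M. j < D 0 \<omega>} \<omega> :: ennreal)
            \<le> ennreal (real (min (Zs 0 \<omega>) (Ws 0 \<omega>)))" .
    qed
    finally show ?thesis .
  qed
  define S where "S = enn2real I"
  have sumS: "(\<Sum>j\<in>{1..L}. a j) \<le> S" for L
  proof -
    have "(\<Sum>j\<in>{1..L}. a j) \<le> (\<Sum>j<Suc L. a j)"
      by (rule sum_mono2) (auto simp: a_nonneg)
    moreover have "ennreal (\<Sum>j<Suc L. a j) \<le> ennreal S"
      using sumI[of "Suc L"] finmean unfolding S_def I_def by simp
    ultimately show ?thesis using S_def by (simp add: ennreal_le_iff)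
  qed
  define c where "c = exp (- (S / (1 - r)))"
  have c_pos: "0 < c" by (simp add: c_def)
  have prod_ge: "c \<le> (\<Prod>j\<in>{1..L}. (1 - a j))" for L
  proof -
    have "c \<le> exp (- ((\<Sum>j\<in>{1..L}. a j) / (1 - r)))"
      unfolding c_def using sumS[of L] r_lt1 by (simp add: divide_right_mono)
    also have "\<dots> = (\<Prod>j\<in>{1..L}. exp (- (a j / (1 - r))))"
      by (simp add: exp_sum[symmetric] sum_divide_distrib sum_negf)
    also have "\<dots> \<le> (\<Prod>j\<in>{1..L}. (1 - a j))"
      by (rule prod_mono) (use exp_bound a_nonneg a_le r_lt1 in auto)
    finally show ?thesis .
  qed
  define A where "A n = sigma_sets (space M) (\<Union>i\<in>{Inl n, Inr n}. E i)" for n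
  have E_pow: "E i \<subseteq> Pow (space M)" for i unfolding E_def by auto
  have gen_pow: "(\<Union>i\<in>{Inl n, Inr n}. E i) \<subseteq> Pow (space M)" for n using E_pow by blast
  have UN_I: "(\<Union>j\<in>UNIV. {Inl j, Inr j}) = (UNIV :: (nat+nat) set)"
  proof (rule set_eqI)
    fix x :: "nat + nat" show "x \<in> (\<Union>j\<in>UNIV. {Inl j, Inr j}) \<longleftrightarrow> x \<in> UNIV"
      by (cases x) auto
  qed
  have indA: "P.indep_sets A UNIV"
    unfolding A_def
  proof (rule P.indep_sets_collect_sigma)
    show "P.indep_sets E (\<Union>j\<in>UNIV. {Inl j, Inr j})" unfolding UN_I by (rule indE)
  next
    fix i :: "nat + nat" and j :: nat
    show "Int_stable (E i)"
      unfolding E_def Int_stable_def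
      apply auto
      apply (rule_tac x="B \<inter> Ba" in exI)
      apply auto
      done
  next
    show "disjoint_family_on (\<lambda>j. {Inl j, Inr j}) UNIV"
      unfolding disjoint_family_on_def by auto
  qed
  have sigA: "sigma_algebra (space M) (A n)" for n
    unfolding A_def by (rule sigma_algebra_sigma_sets[OF gen_pow])
  have A_pow: "A n \<subseteq> Pow (space M)" for n unfolding A_def using sigma_sets_into_sp[OF gen_pow] by blast
  have Ev_A: "Ev k j \<in> A k" for k j
  proof -
    interpret SA: sigma_algebra "space M" "A k" by (rule sigA)
    have "ZG k j \<in> A k" unfolding A_def using ZG_E by (intro sigma_sets.Basic) blast
    moreover have "WG k j \<in> A k" unfolding A_def using WG_E by (intro sigma_sets.Basic) blast
    ultimately have "ZG k j \<inter> WG k j \<in> A k" by (rule SA.Int)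
    thus ?thesis unfolding Ev_eq A_def by (rule sigma_sets.Compl)
  qed
  define B where "B m L = {\<omega>\<in>space M. \<forall>j\<in>{1..L}. D (m+j) \<omega> \<le> j}" for m L
  define C where "C m = {\<omega>\<in>space M. \<forall>j. 1 \<le> j \<longrightarrow> D (m+j) \<omega> \<le> j}" for m
  have B_sets[measurable]: "B m L \<in> sets M" for m L unfolding B_def by measurable
  have C_sets[measurable]: "C m \<in> sets M" for m unfolding C_def by measurable
  have probB: "P.prob (B m L) = (\<Prod>j\<in>{1..L}. (1 - a j))" for m L
  proof (cases "L = 0")
    case True
    hence "B m L = space M" by (auto simp: B_def)
    thus ?thesis using True by (simp add: P.prob_space)
  next
    case False
    define J where "J = (\<lambda>j. m + j) ` {1..L}"
    have BJ0: "B m L = (\<Inter>j\<in>{1..L}. Ev (m+j) j)"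
      using False unfolding B_def Ev_def by (auto, metis One_nat_def Suc_leI atLeastAtMost_iff le_refl)
    have "(\<Inter>i\<in>J. Ev i (i - m)) = (\<Inter>j\<in>{1..L}. Ev (m+j) j)"
      unfolding J_def image_image by simp
    with BJ0 have BJ: "B m L = (\<Inter>i\<in>J. Ev i (i - m))" by simp
    have "P.prob (\<Inter>i\<in>J. Ev i (i - m)) = (\<Prod>i\<in>J. P.prob (Ev i (i - m)))"
      by (rule P.indep_setsD[OF indA]) (use False Ev_A in \<open>auto simp: J_def\<close>)
    also have "\<dots> = (\<Prod>j\<in>{1..L}. P.prob (Ev (m+j) j))"
      unfolding J_def by (subst prod.reindex) (auto simp: inj_on_def)
    finally show ?thesis using BJ pEv by simp
  qed
  have probC: "c \<le> P.prob (C m)" for m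
  proof -
    have "(\<lambda>L. P.prob (B m L)) \<longlonglongrightarrow> P.prob (\<Inter>L. B m L)"
      by (rule P.finite_Lim_measure_decseq) (auto simp: decseq_def B_def)
    moreover have "(\<Inter>L. B m L) = C m" by (auto simp: B_def C_def) (meson atLeastAtMost_iff le_refl)
    ultimately have "(\<lambda>L. P.prob (B m L)) \<longlonglongrightarrow> P.prob (C m)" by simp
    thus ?thesis by (rule LIMSEQ_le_const) (use probB prod_ge in auto)
  qed
  define U where "U K = {\<omega>\<in>space M. \<exists>m\<ge>K. \<omega> \<in> C m}" for K
  define Xe where "Xe = {\<omega>\<in>space M. \<forall>K. \<exists>m\<ge>K. \<omega> \<in> C m}"
  have U_sets[measurable]: "U K \<in> sets M" for K unfolding U_def by measurable
  have probXe: "c \<le> P.prob Xe"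
  proof -
    have "(\<lambda>K. P.prob (U K)) \<longlonglongrightarrow> P.prob (\<Inter>K. U K)"
    proof (rule P.finite_Lim_measure_decseq)
      show "range U \<subseteq> P.events" using U_sets by auto
      show "decseq U" by (rule decseq_SucI) (auto simp: U_def dest: Suc_leD)
    qed
    moreover have "(\<Inter>K. U K) = Xe" by (auto simp: U_def Xe_def)
    ultimately have lim: "(\<lambda>K. P.prob (U K)) \<longlonglongrightarrow> P.prob Xe" by simp
    have "c \<le> P.prob (U K)" for K
    proof -
      have "C K \<subseteq> U K" using C_sets[of K, THEN sets.sets_into_space] by (auto simp: U_def)
      hence "P.prob (C K) \<le> P.prob (U K)" by (intro P.finite_measure_mono) auto
      thus ?thesis using probC[of K] by simp
    qed
    with lim show ?thesis by (intro LIMSEQ_le_const) auto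
  qed
  have tail: "Xe \<in> P.tail_events A"
    unfolding P.tail_events_def
  proof (rule InterI, clarify)
    fix n
    define \<Sigma> where "\<Sigma> = sigma_sets (space M) (\<Union> (A ` {n..}))"
    have pw: "\<Union> (A ` {n..}) \<subseteq> Pow (space M)" using A_pow by blast
    interpret S: sigma_algebra "space M" \<Sigma> unfolding \<Sigma>_def by (rule sigma_algebra_sigma_sets[OF pw])
    have Ev_S: "Ev k j \<in> \<Sigma>" if "n \<le> k" for k j
      unfolding \<Sigma>_def using Ev_A[of k j] that by (intro sigma_sets.Basic) blast
    have C_S: "C m \<in> \<Sigma>" if "n \<le> m" for m
    proof -
      have "{\<omega>\<in>space M. 1 \<le> j \<longrightarrow> D (m+j) \<omega> \<le> j} \<in> \<Sigma>" for j
      proof (cases "1 \<le> j")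
        case True
        hence "{\<omega>\<in>space M. 1 \<le> j \<longrightarrow> D (m+j) \<omega> \<le> j} = Ev (m+j) j" by (auto simp: Ev_def)
        thus ?thesis using Ev_S[of "m+j" j] that by simp
      next
        case False
        hence "{\<omega>\<in>space M. 1 \<le> j \<longrightarrow> D (m+j) \<omega> \<le> j} = space M" by auto
        thus ?thesis by simp
      qed
      hence "{\<omega>\<in>space M. \<forall>j. 1 \<le> j \<longrightarrow> D (m+j) \<omega> \<le> j} \<in> \<Sigma>"
        by (rule S.sets_Collect_countable_All)
      thus ?thesis by (simp add: C_def)
    qed
    have XeS: "Xe = {\<omega>\<in>space M. \<forall>K. \<exists>m. \<omega> \<in> C (n + K + m)}"
    proof (rule set_eqI, rule iffI)
      fix \<omega> assume "\<omega> \<in> Xe"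
      hence \<omega>: "\<omega> \<in> space M" "\<And>K. \<exists>m\<ge>K. \<omega> \<in> C m" by (auto simp: Xe_def)
      have "\<exists>m'. \<omega> \<in> C (n + K + m')" for K
      proof -
        obtain m where "m \<ge> n + K" "\<omega> \<in> C m" using \<omega>(2) by blast
        thus ?thesis by (intro exI[of _ "m - (n + K)"]) simp
      qed
      thus "\<omega> \<in> {\<omega>\<in>space M. \<forall>K. \<exists>m. \<omega> \<in> C (n + K + m)}" using \<omega>(1) by blast
    next
      fix \<omega> assume "\<omega> \<in> {\<omega>\<in>space M. \<forall>K. \<exists>m. \<omega> \<in> C (n + K + m)}"
      hence \<omega>: "\<omega> \<in> space M" "\<And>K. \<exists>m. \<omega> \<in> C (n + K + m)" by auto
      have "\<exists>m\<ge>K. \<omega> \<in> C m" for K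
      proof -
        obtain m where "\<omega> \<in> C (n + K + m)" using \<omega>(2) by blast
        thus ?thesis by (intro exI[of _ "n + K + m"]) simp
      qed
      thus "\<omega> \<in> Xe" using \<omega>(1) by (auto simp: Xe_def)
    qed
    have "{\<omega>\<in>space M. \<omega> \<in> C (n + K + m)} \<in> \<Sigma>" for K m
      using C_S[of "n + K + m"] C_sets[THEN sets.sets_into_space] by (simp add: Int_absorb1 Collect_conj_eq[symmetric] Int_def[symmetric])
    hence "{\<omega>\<in>space M. \<forall>K. \<exists>m. \<omega> \<in> C (n + K + m)} \<in> \<Sigma>"
      by (intro S.sets_Collect_countable_All S.sets_Collect_countable_Ex)
    thus "Xe \<in> sigma_sets (space M) (\<Union> (A ` {n..}))" unfolding XeS \<Sigma>_def .
  qed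
  have Xe1: "P.prob Xe = 1"
    using P.kolmogorov_0_1_law[OF sigA indA tail] probXe c_pos by auto
  define N where "N \<omega> = (if \<exists>m. 1 \<le> m \<and> \<omega> \<in> C m then enat (LEAST m. 1 \<le> m \<and> \<omega> \<in> C m) else \<infinity>)" for \<omega>
  have N_meas: "N \<in> measurable M (count_space UNIV)"
    unfolding N_def by measurable
  have N_ge: "\<forall>\<omega>\<in>space M. N \<omega> \<ge> 1"
  proof
    fix \<omega> assume "\<omega> \<in> space M"
    show "N \<omega> \<ge> 1"
    proof (cases "\<exists>m. 1 \<le> m \<and> \<omega> \<in> C m")
      case True
      hence "1 \<le> (LEAST m. 1 \<le> m \<and> \<omega> \<in> C m)" by (rule LeastI2_ex) auto
      thus ?thesis using True by (simp add: N_def one_enat_def)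
    next
      case False show ?thesis unfolding N_def if_not_P[OF False] by simp
    qed
  qed
  have N_fin: "P.prob {\<omega> \<in> space M. N \<omega> < \<infinity>} = 1"
  proof -
    have sets: "{\<omega> \<in> space M. N \<omega> < \<infinity>} \<in> sets M" using N_meas by measurable
    have "Xe \<subseteq> {\<omega> \<in> space M. N \<omega> < \<infinity>}"
    proof
      fix \<omega> assume "\<omega> \<in> Xe"
      then obtain m where "m \<ge> 1" "\<omega> \<in> C m" "\<omega> \<in> space M" unfolding Xe_def by blast
      thus "\<omega> \<in> {\<omega> \<in> space M. N \<omega> < \<infinity>}" by (auto simp: N_def)
    qed
    hence "P.prob Xe \<le> P.prob {\<omega> \<in> space M. N \<omega> < \<infinity>}"
      by (rule P.finite_measure_mono[OF _ sets])
    thus ?thesis using Xe1 P.prob_le_1[of "{\<omega> \<in> space M. N \<omega> < \<infinity>}"] by linarith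
  qed
  have N_AE: "AE \<omega> in M. \<forall>n::nat. enat n \<ge> N \<omega> \<longrightarrow>
               int (the_enat (N \<omega>)) \<in> chain_set (\<lambda>k. min (Zs k \<omega>) (Ws k \<omega>)) (int n)"
  proof (rule AE_I2, intro allI impI)
    fix \<omega> n assume \<omega>: "\<omega> \<in> space M" and n: "N \<omega> \<le> enat n"
    have ex: "\<exists>m. 1 \<le> m \<and> \<omega> \<in> C m" using n by (auto simp: N_def split: if_splits)
    define m where "m = (LEAST m. 1 \<le> m \<and> \<omega> \<in> C m)"
    have Cm: "\<omega> \<in> C m" unfolding m_def by (rule LeastI2_ex[OF ex]) auto
    have Nm: "N \<omega> = enat m" using ex by (simp add: N_def m_def)
    have mn: "m \<le> n" using n Nm by simp
    have "in_chain (\<lambda>k. min (Zs k \<omega>) (Ws k \<omega>)) (int n) (int m)"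
    proof (rule chain_from_cut[OF _ _ mn])
      show "1 \<le> min (Zs k \<omega>) (Ws k \<omega>)" for k using posZ[OF \<omega>] posW[OF \<omega>] by simp
      show "min (Zs (m + j) \<omega>) (Ws (m + j) \<omega>) \<le> j" if "1 \<le> j" for j
        using Cm that by (auto simp: C_def D_def)
    qed
    thus "int (the_enat (N \<omega>)) \<in> chain_set (\<lambda>k. min (Zs k \<omega>) (Ws k \<omega>)) (int n)"
      by (simp add: Nm chain_set_def)
  qed
  show ?thesis using N_meas N_ge N_fin N_AE by blast
qed

end
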